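(* Let $H=([n],E)$ be a hypergraph. Then $\Delta_H$ is connected if and only if for every pair of edges $F,F'\in E$ there is a sequence of edges $F=F_1,F_2,\dots,F_r=F'$ such that for each $1\le i\le r-1$, $F_i\cup F_{i+1}\ne[n]$ or $F_i\cap F_{i+1}=\emptyset$.
   Context: A hypergraph $H=([n],E)$ has edges that are nonempty subsets of $[n]$; standing assumptions: every vertex in some edge, no edge of size 1, no edge properly contained in another. The coloring complex $\Delta_H$ is the abstract simplicial complex whose vertices are the nonempty proper subsets of $[n]$ and whose faces are the chains $\emptyset\neq A_1\subsetneq\cdots\subsetneq A_l\neq[n]$ ($l\ge0$) such that, with $A_0=\emptyset$, $A_{l+1}=[n]$, some difference $A_i\setminus A_{i-1}$ ($1\le i\le l+1$) contains an edge of $H$. *)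

theory Defs
  imports Main
begin

definition hypergraph :: "nat \<Rightarrow> nat set set \<Rightarrow> bool" where
  "hypergraph n E \<longleftrightarrow>
     (\<forall>F\<in>E. F \<noteq> {} \<and> F \<subseteq> {1..n}) \<and>
     (\<forall>v\<in>{1..n}. \<exists>F\<in>E. v \<in> F) \<and>
     (\<forall>F\<in>E. card F \<noteq> 1) \<and>
     (\<forall>F\<in>E. \<forall>G\<in>E. \<not> F \<subset> G)"

text \<open>Faces of the coloring complex: finite chains of nonempty proper subsets of [n]
(a chain is represented by the set of its members), such that, after adjoining
the empty set at the bottom and [n] at the top, some difference of two consecutive
members contains an edge of H.\<close>
definition coloring_face :: "nat \<Rightarrow> nat set set \<Rightarrow> nat set set \<Rightarrow> bool" where
  "coloring_face n E \<sigma> \<longleftrightarrow>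
     finite \<sigma> \<and>
     (\<forall>A\<in>\<sigma>. A \<noteq> {} \<and> A \<subset> {1..n}) \<and>
     (\<forall>A\<in>\<sigma>. \<forall>B\<in>\<sigma>. A \<subseteq> B \<or> B \<subseteq> A) \<and>
     (\<exists>B\<in>\<sigma> \<union> {{}, {1..n}}. \<exists>C\<in>\<sigma> \<union> {{}, {1..n}}.
        B \<subset> C \<and> \<not> (\<exists>D\<in>\<sigma>. B \<subset> D \<and> D \<subset> C) \<and>
        (\<exists>F\<in>E. F \<subseteq> C - B))"

definition coloring_complex :: "nat \<Rightarrow> nat set set \<Rightarrow> nat set set set" where
  "coloring_complex n E = {\<sigma>. coloring_face n E \<sigma>}"

definition complex_connected :: "'a set set \<Rightarrow> bool" where
  "complex_connected \<Delta> \<longleftrightarrow>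
     (\<forall>u v. {u} \<in> \<Delta> \<longrightarrow> {v} \<in> \<Delta> \<longrightarrow> (\<lambda>x y. {x, y} \<in> \<Delta>)\<^sup>*\<^sup>* u v)"

end

theory Submission
  imports Defs
begin

lemma L_edge:
  assumes H: "hypergraph n E" and "A \<noteq> {}" "A \<subset> B" "B \<subset> {1..n}" "F \<in> E"
    and F: "F \<subseteq> A \<or> F \<subseteq> B - A \<or> F \<inter> B = {}"
  shows "{A, B} \<in> coloring_complex n E"
proof -
  have FU: "F \<subseteq> {1..n}" using H assms(5) unfolding hypergraph_def by blast
  have base: "finite {A,B} \<and> (\<forall>X\<in>{A,B}. X \<noteq> {} \<and> X \<subset> {1..n}) \<and>
     (\<forall>X\<in>{A,B}. \<forall>Y\<in>{A,B}. X \<subseteq> Y \<or> Y \<subseteq> X)"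
    using assms by auto
  have "\<exists>B'\<in>{A,B} \<union> {{}, {1..n}}. \<exists>C\<in>{A,B} \<union> {{}, {1..n}}.
        B' \<subset> C \<and> \<not> (\<exists>D\<in>{A,B}. B' \<subset> D \<and> D \<subset> C) \<and> (\<exists>F\<in>E. F \<subseteq> C - B')"
  proof -
    { assume "F \<subseteq> A"
      then have ?thesis using assms
        by (rule_tac x="{}" in bexI, rule_tac x=A in bexI) blast+ }
    moreover
    { assume "F \<subseteq> B - A"
      then have ?thesis using assms
        by (rule_tac x="A" in bexI, rule_tac x=B in bexI) blast+ }
    moreover
    { assume "F \<inter> B = {}"
      then have "F \<subseteq> {1..n} - B" using FU by blast
      then have ?thesis using assms
        by (rule_tac x="B" in bexI, rule_tac x="{1..n}" in bexI) blast+ }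
    ultimately show ?thesis using F by blast
  qed
  with base show ?thesis unfolding coloring_complex_def coloring_face_def mem_Collect_eq
    by (elim conjE) (intro conjI; assumption)
qed

lemma L_vert:
  assumes H: "hypergraph n E" and "A \<noteq> {}" "A \<subset> {1..n}" "F \<in> E"
    and F: "F \<subseteq> A \<or> F \<inter> A = {}"
  shows "{A} \<in> coloring_complex n E"
proof -
  have FU: "F \<subseteq> {1..n}" using H assms(4) unfolding hypergraph_def by blast
  have base: "finite {A} \<and> (\<forall>X\<in>{A}. X \<noteq> {} \<and> X \<subset> {1..n}) \<and>
     (\<forall>X\<in>{A}. \<forall>Y\<in>{A}. X \<subseteq> Y \<or> Y \<subseteq> X)"
    using assms by auto
  have "\<exists>B'\<in>{A} \<union> {{}, {1..n}}. \<exists>C\<in>{A} \<union> {{}, {1..n}}.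
        B' \<subset> C \<and> \<not> (\<exists>D\<in>{A}. B' \<subset> D \<and> D \<subset> C) \<and> (\<exists>F\<in>E. F \<subseteq> C - B')"
  proof -
    { assume "F \<subseteq> A"
      then have ?thesis using assms
        by (rule_tac x="{}" in bexI, rule_tac x=A in bexI) blast+ }
    moreover
    { assume "F \<inter> A = {}"
      then have "F \<subseteq> {1..n} - A" using FU by blast
      then have ?thesis using assms
        by (rule_tac x="A" in bexI, rule_tac x="{1..n}" in bexI) blast+ }
    ultimately show ?thesis using F by blast
  qed
  with base show ?thesis unfolding coloring_complex_def coloring_face_def mem_Collect_eq
    by (elim conjE) (intro conjI; assumption)
qed

lemma face_assoc:
  assumes "\<sigma> \<in> coloring_complex n E"
  shows "\<exists>F\<in>E. \<forall>A\<in>\<sigma>. F \<subseteq> A \<or> F \<inter> A = {}"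
proof -
  have D: "finite \<sigma> \<and> (\<forall>A\<in>\<sigma>. A \<noteq> {} \<and> A \<subset> {1..n}) \<and>
     (\<forall>A\<in>\<sigma>. \<forall>B\<in>\<sigma>. A \<subseteq> B \<or> B \<subseteq> A) \<and>
     (\<exists>B\<in>\<sigma> \<union> {{}, {1..n}}. \<exists>C\<in>\<sigma> \<union> {{}, {1..n}}.
        B \<subset> C \<and> \<not> (\<exists>D\<in>\<sigma>. B \<subset> D \<and> D \<subset> C) \<and>
        (\<exists>F\<in>E. F \<subseteq> C - B))"
    using assms unfolding coloring_complex_def coloring_face_def mem_Collect_eq .
  note ne = D[THEN conjunct2, THEN conjunct1]
  note ch = D[THEN conjunct2, THEN conjunct2, THEN conjunct1]
  note ex = D[THEN conjunct2, THEN conjunct2, THEN conjunct2]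
  from ex obtain B C F where B: "B \<in> \<sigma> \<union> {{}, {1..n}}" and C: "C \<in> \<sigma> \<union> {{}, {1..n}}"
    and BC: "B \<subset> C" and nD: "\<not> (\<exists>D\<in>\<sigma>. B \<subset> D \<and> D \<subset> C)" and F: "F \<in> E" "F \<subseteq> C - B"
    by (elim bexE conjE)
  have "\<forall>A\<in>\<sigma>. F \<subseteq> A \<or> F \<inter> A = {}"
  proof
    fix A assume A: "A \<in> \<sigma>"
    have AU: "A \<subseteq> {1..n}" using A ne by blast
    have cB: "A \<subseteq> B \<or> B \<subseteq> A"
    proof -
      { assume "B \<in> \<sigma>" then have ?thesis using A ch by blast }
      moreover { assume "B = {}" then have ?thesis by simp }
      moreover { assume "B = {1..n}" then have ?thesis using AU by simp }
      ultimately show ?thesis using B by blast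
    qed
    have cC: "A \<subseteq> C \<or> C \<subseteq> A"
    proof -
      { assume "C \<in> \<sigma>" then have ?thesis using A ch by blast }
      moreover { assume "C = {}" then have ?thesis by simp }
      moreover { assume "C = {1..n}" then have ?thesis using AU by simp }
      ultimately show ?thesis using C by blast
    qed
    show "F \<subseteq> A \<or> F \<inter> A = {}"
    proof (cases "A \<subseteq> B")
      case True then show ?thesis using F by blast
    next
      case False
      show ?thesis
      proof (cases "C \<subseteq> A")
        case True then show ?thesis using F by blast
      next
        case False2: False
        have "B \<subset> A" using False cB by blast
        moreover have "A \<subset> C" using False2 cC by blast
        ultimately have False using nD A by blast
        then show ?thesis ..
      qed
    qed
  qed
  then show ?thesis using F by blast
qed

lemma face_mem:
  assumes "\<sigma> \<in> coloring_complex n E" "A \<in> \<sigma>"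
  shows "A \<noteq> {} \<and> A \<subset> {1..n}"
proof -
  have "coloring_face n E \<sigma>" using assms(1) by (simp add: coloring_complex_def)
  then have "\<forall>A\<in>\<sigma>. A \<noteq> {} \<and> A \<subset> {1..n}" unfolding coloring_face_def by (elim conjE)
  then show ?thesis using assms(2) by blast
qed

definition adjE :: "nat \<Rightarrow> nat set set \<Rightarrow> nat set \<Rightarrow> nat set \<Rightarrow> bool" where
  "adjE n E G H \<longleftrightarrow> G \<in> E \<and> H \<in> E \<and> (G \<union> H \<noteq> {1..n} \<or> G \<inter> H = {})"

lemma rtranclp_to_list:
  assumes "(adjE n E)\<^sup>*\<^sup>* a b" "b \<in> E"
  shows "\<exists>Fs :: nat set list. Fs \<noteq> [] \<and> hd Fs = a \<and> last Fs = b \<and>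
       set Fs \<subseteq> E \<and>
       (\<forall>i. Suc i < length Fs \<longrightarrow>
          Fs ! i \<union> Fs ! Suc i \<noteq> {1..n} \<or> Fs ! i \<inter> Fs ! Suc i = {})"
  using assms(1)
proof (induction rule: converse_rtranclp_induct)
  case base
  then show ?case using assms(2) by (rule_tac x="[b]" in exI) auto
next
  case (step a y)
  then obtain Fs where Fs: "Fs \<noteq> []" "hd Fs = y" "last Fs = b" "set Fs \<subseteq> E"
    "\<forall>i. Suc i < length Fs \<longrightarrow>
          Fs ! i \<union> Fs ! Suc i \<noteq> {1..n} \<or> Fs ! i \<inter> Fs ! Suc i = {}" by blast
  have ay: "a \<in> E" "a \<union> y \<noteq> {1..n} \<or> a \<inter> y = {}" using step(1) unfolding adjE_def by auto
  have "\<forall>i. Suc i < length (a#Fs) \<longrightarrow>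
          (a#Fs) ! i \<union> (a#Fs) ! Suc i \<noteq> {1..n} \<or> (a#Fs) ! i \<inter> (a#Fs) ! Suc i = {}"
  proof (intro allI impI)
    fix i assume i: "Suc i < length (a#Fs)"
    show "(a#Fs) ! i \<union> (a#Fs) ! Suc i \<noteq> {1..n} \<or> (a#Fs) ! i \<inter> (a#Fs) ! Suc i = {}"
    proof (cases i)
      case 0
      then show ?thesis using ay Fs(1,2) by (simp add: hd_conv_nth)
    next
      case (Suc j)
      then show ?thesis using Fs(5) i by simp
    qed
  qed
  then show ?case using Fs ay by (rule_tac x="a#Fs" in exI) auto
qed

lemma list_to_rtranclp:
  assumes "Fs \<noteq> []" "set Fs \<subseteq> E"
    "\<forall>i. Suc i < length Fs \<longrightarrow>
          Fs ! i \<union> Fs ! Suc i \<noteq> {1..n} \<or> Fs ! i \<inter> Fs ! Suc i = {}"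
  shows "(adjE n E)\<^sup>*\<^sup>* (hd Fs) (last Fs)"
  using assms
proof (induction Fs)
  case Nil then show ?case by simp
next
  case (Cons a Fs)
  show ?case
  proof (cases "Fs = []")
    case True then show ?thesis by simp
  next
    case False
    have IH: "(adjE n E)\<^sup>*\<^sup>* (hd Fs) (last Fs)"
      apply (rule Cons.IH[OF False])
      using Cons.prems(2) apply simp
      using Cons.prems(3) by (metis Suc_less_eq length_Cons nth_Cons_Suc)
    have "a \<union> Fs ! 0 \<noteq> {1..n} \<or> a \<inter> Fs ! 0 = {}"
      using Cons.prems(3)[rule_format, of 0] False by simp
    moreover have "hd Fs \<in> E" "a \<in> E" using Cons.prems(2) False by auto
    ultimately have "adjE n E a (hd Fs)" using False
      unfolding adjE_def by (simp add: hd_conv_nth)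
    then show ?thesis using IH False by (auto intro: converse_rtranclp_into_rtranclp)
  qed
qed


abbreviation conn :: "nat \<Rightarrow> nat set set \<Rightarrow> nat set \<Rightarrow> nat set \<Rightarrow> bool" where
  "conn n E \<equiv> (\<lambda>x y. {x, y} \<in> coloring_complex n E)\<^sup>*\<^sup>*"

lemma conn_sym:
  assumes "conn n E x y" shows "conn n E y x"
  using assms
proof (induction rule: rtranclp_induct)
  case base then show ?case by simp
next
  case (step y z)
  then have "{z, y} \<in> coloring_complex n E" by (simp add: insert_commute)
  then show ?case using step(3) by (rule converse_rtranclp_into_rtranclp)
qed

lemma hyp_facts:
  assumes "hypergraph n E"
  shows "(\<forall>F\<in>E. F \<noteq> {} \<and> F \<subseteq> {1..n}) \<and> (\<forall>v\<in>{1..n}. \<exists>F\<in>E. v \<in> F) \<and>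
    (\<forall>F\<in>E. card F \<noteq> 1) \<and> (\<forall>F\<in>E. \<forall>G\<in>E. \<not> F \<subset> G)"
  using assms unfolding hypergraph_def .

lemmas hyp_facts1 = hyp_facts[THEN conjunct1]
lemmas hyp_facts2 = hyp_facts[THEN conjunct2, THEN conjunct1]
lemmas hyp_facts3 = hyp_facts[THEN conjunct2, THEN conjunct2, THEN conjunct1]
lemmas hyp_facts4 = hyp_facts[THEN conjunct2, THEN conjunct2, THEN conjunct2]

lemma adj_common:
  assumes H: "hypergraph n E" and w: "w \<noteq> {}" "w \<subset> {1..n}" and G: "G \<in> E" "G \<subseteq> w \<or> G \<inter> w = {}"
    and G': "G' \<in> E" "G' \<subseteq> w \<or> G' \<inter> w = {}"
  shows "adjE n E G G'"
proof -
  have GU: "G \<subseteq> {1..n}" "G' \<subseteq> {1..n}" using hyp_facts1[OF H] G G' by auto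
  have "G \<union> G' \<noteq> {1..n} \<or> G \<inter> G' = {}"
  proof (cases "G \<subseteq> w")
    case True
    show ?thesis
    proof (cases "G' \<subseteq> w")
      case True2: True
      then have "G \<union> G' \<subseteq> w" using True by blast
      then show ?thesis using w by blast
    next
      case False
      then show ?thesis using G' True by blast
    qed
  next
    case False
    then have g: "G \<inter> w = {}" using G by blast
    show ?thesis
    proof (cases "G' \<subseteq> w")
      case True2: True
      then show ?thesis using g by blast
    next
      case False2: False
      then have "G' \<inter> w = {}" using G' by blast
      then have "G \<union> G' \<subseteq> {1..n} - w" using g GU by blast
      then show ?thesis using w by blast
    qed
  qed
  then show ?thesis using G G' unfolding adjE_def by blast
qed

lemma fwd:
  assumes H: "hypergraph n E" and "conn n E u v" and u: "u \<noteq> {}" "u \<subset> {1..n}"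
    and G: "G \<in> E" "G \<subseteq> u \<or> G \<inter> u = {}"
  shows "\<forall>G'\<in>E. (G' \<subseteq> v \<or> G' \<inter> v = {}) \<longrightarrow> (adjE n E)\<^sup>*\<^sup>* G G'"
  using assms(2)
proof (induction rule: rtranclp_induct)
  case base
  show ?case using adj_common[OF H u G] by blast
next
  case (step y z)
  obtain K where K: "K \<in> E" "\<forall>A\<in>{y,z}. K \<subseteq> A \<or> K \<inter> A = {}"
    using face_assoc[OF step(2)] by blast
  have z: "z \<noteq> {} \<and> z \<subset> {1..n}" using face_mem[OF step(2)] by simp
  have GK: "(adjE n E)\<^sup>*\<^sup>* G K" using step(3) K by blast
  show ?case
  proof (intro ballI impI)
    fix G' assume "G' \<in> E" "G' \<subseteq> z \<or> G' \<inter> z = {}"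
    then have KG: "adjE n E K G'" using adj_common[OF H _ _ K(1)] K z by blast
    show "(adjE n E)\<^sup>*\<^sup>* G G'" using GK KG by (rule rtranclp.rtrancl_into_rtrancl)
  qed
qed

lemma in_lemma:
  assumes H: "hypergraph n E" and A: "A \<noteq> {}" "A \<subset> {1..n}" and G: "G \<in> E" "G \<subseteq> A"
  shows "conn n E A G"
proof (cases "G = A")
  case True then show ?thesis by simp
next
  case False
  have ne: "G \<noteq> {}" using hyp_facts1[OF H] G(1) by blast
  have psub: "G \<subset> A" using G(2) False by (rule psubsetI)
  have "{G, A} \<in> coloring_complex n E"
    by (rule L_edge[OF H ne psub A(2) G(1)]) simp
  then have "{A, G} \<in> coloring_complex n E" by (simp add: insert_commute)
  then show ?thesis by (rule r_into_rtranclp)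
qed

lemma out_lemma:
  assumes H: "hypergraph n E" and A: "A \<noteq> {}" "A \<subset> {1..n}" and G: "G \<in> E" "G \<inter> A = {}"
  shows "conn n E A ({1..n} - G)"
proof (cases "A = {1..n} - G")
  case True then show ?thesis by simp
next
  case False
  have GU: "G \<noteq> {}" "G \<subseteq> {1..n}" using hyp_facts1[OF H] G(1) by auto
  have "A \<subseteq> {1..n} - G" using A(2) G(2) by blast
  then have psub: "A \<subset> {1..n} - G" using False by (rule psubsetI)
  have pr: "{1..n} - G \<subset> {1..n}" using GU by blast
  have "{A, {1..n} - G} \<in> coloring_complex n E"
    by (rule L_edge[OF H A(1) psub pr G(1)]) blast
  then show ?thesis by (rule r_into_rtranclp)
qed

lemma inout:
  assumes H: "hypergraph n E" and G: "G \<in> E" "G \<noteq> {1..n}" "\<forall>x. {1..n} - G \<noteq> {x}"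
  shows "conn n E G ({1..n} - G)"
proof -
  have GU: "G \<noteq> {}" "G \<subseteq> {1..n}" using hyp_facts1[OF H] G(1) by auto
  obtain x where x: "x \<in> {1..n} - G" using GU G(2) by blast
  obtain y where y: "y \<in> {1..n} - G" "y \<noteq> x" using x G(3) by blast
  define W where "W = insert x G"
  have W1: "W \<noteq> {}" unfolding W_def by simp
  have W2: "W \<subset> {1..n}" unfolding W_def using x y GU by blast
  have sub: "G \<subseteq> W" unfolding W_def by blast
  have c1: "conn n E G W" using conn_sym[OF in_lemma[OF H W1 W2 G(1) sub]] .
  have xne: "{x} \<noteq> {}" by simp
  have xW: "{x} \<subset> W" unfolding W_def using x GU by blast
  have "{{x}, W} \<in> coloring_complex n E"
    by (rule L_edge[OF H xne xW W2 G(1)]) (use x in \<open>auto simp: W_def\<close>)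
  then have "{W, {x}} \<in> coloring_complex n E" by (simp add: insert_commute)
  then have c2: "conn n E W {x}" by (rule r_into_rtranclp)
  have xU: "{x} \<subset> {1..n}" using x y by blast
  have xG: "G \<inter> {x} = {}" using x by blast
  have c3: "conn n E {x} ({1..n} - G)" using out_lemma[OF H xne xU G(1) xG] .
  show ?thesis using c1 c2 c3 by (meson rtranclp_trans)
qed

lemma vertex_lemma:
  assumes H: "hypergraph n E" and G: "G \<in> E" "G \<noteq> {1..n}" "\<forall>x. {1..n} - G \<noteq> {x}"
    and A: "A \<noteq> {}" "A \<subset> {1..n}" "G \<subseteq> A \<or> G \<inter> A = {}"
  shows "conn n E A G"
proof (cases "G \<subseteq> A")
  case True then show ?thesis using in_lemma[OF H A(1,2) G(1)] by blast
next
  case False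
  then have "G \<inter> A = {}" using A by blast
  then have "conn n E A ({1..n} - G)" using out_lemma[OF H A(1,2) G(1)] by blast
  then show ?thesis using conn_sym[OF inout[OF H G]] by (meson rtranclp_trans)
qed

lemma chain_lemma:
  assumes H: "hypergraph n E" and good: "\<forall>G\<in>E. G \<noteq> {1..n} \<and> (\<forall>x. {1..n} - G \<noteq> {x})"
    and "(adjE n E)\<^sup>*\<^sup>* G G'"
  shows "conn n E G G'"
  using assms(3)
proof (induction rule: rtranclp_induct)
  case base then show ?case by simp
next
  case (step y z)
  have yz: "y \<in> E" "z \<in> E" "y \<union> z \<noteq> {1..n} \<or> y \<inter> z = {}" using step(2) unfolding adjE_def by auto
  have yU: "y \<noteq> {}" "y \<subseteq> {1..n}" "z \<noteq> {}" "z \<subseteq> {1..n}" using hyp_facts1[OF H] yz by auto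
  have "conn n E y z"
  proof (cases "y \<union> z \<noteq> {1..n}")
    case True
    have W: "y \<union> z \<noteq> {}" "y \<union> z \<subset> {1..n}" using True yU by auto
    have "conn n E (y \<union> z) y" using in_lemma[OF H W yz(1)] by blast
    moreover have "conn n E (y \<union> z) z" using in_lemma[OF H W yz(2)] by blast
    ultimately show ?thesis using conn_sym by (meson rtranclp_trans)
  next
    case False
    then have "z \<inter> y = {}" using yz by blast
    moreover have "y \<subset> {1..n}" using good yz yU by blast
    ultimately show ?thesis using vertex_lemma[OF H yz(2) _ _ yU(1)] good yz by blast
  qed
  then show ?case using step(3) by (meson rtranclp_trans)
qed

lemma good_nonsingle:
  assumes H: "hypergraph n E" and G: "G \<in> E" "{1..n} - G = {x}"
    and RHS: "\<forall>F\<in>E. \<forall>F'\<in>E. \<exists>Fs :: nat set list. Fs \<noteq> [] \<and> hd Fs = F \<and> last Fs = F' \<and>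
       set Fs \<subseteq> E \<and>
       (\<forall>i. Suc i < length Fs \<longrightarrow>
          Fs ! i \<union> Fs ! Suc i \<noteq> {1..n} \<or> Fs ! i \<inter> Fs ! Suc i = {})"
  shows False
proof -
  note hf = hyp_facts1[OF H] hyp_facts2[OF H] hyp_facts3[OF H] hyp_facts4[OF H]
  have x0: "x \<in> {1..n} - G" using G(2) by simp
  then have x: "x \<in> {1..n}" "x \<notin> G" by auto
  have GUU: "G \<subseteq> {1..n}" using hf(1) G(1) by blast
  from hf(2)[rule_format, OF x(1)] obtain G' where G': "G' \<in> E" "x \<in> G'" by blast
  obtain Fs where Fs: "Fs \<noteq> []" "hd Fs = G" "last Fs = G'" "set Fs \<subseteq> E"
    "\<forall>i. Suc i < length Fs \<longrightarrow>
          Fs ! i \<union> Fs ! Suc i \<noteq> {1..n} \<or> Fs ! i \<inter> Fs ! Suc i = {}"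
    using RHS[rule_format, OF G(1) G'(1)] by (elim exE conjE) blast
  have all: "\<forall>i. i < length Fs \<longrightarrow> Fs ! i = G"
  proof
    fix i show "i < length Fs \<longrightarrow> Fs ! i = G"
    proof (induction i)
      case 0 then show ?case using Fs(1,2) by (simp add: hd_conv_nth)
    next
      case (Suc i)
      show ?case
      proof
        assume i: "Suc i < length Fs"
        then have Gi: "Fs ! i = G" using Suc.IH by simp
        define K where "K = Fs ! Suc i"
        have "Fs ! Suc i \<in> set Fs" using i by (rule nth_mem)
        then have K: "K \<in> E" using Fs(4) unfolding K_def by blast
        have KU: "K \<noteq> {}" "K \<subseteq> {1..n}" "card K \<noteq> 1" using hf(1)[rule_format, OF K] hf(3)[rule_format, OF K] by auto
        have alt: "G \<union> K \<noteq> {1..n} \<or> G \<inter> K = {}" using Fs(5)[rule_format, OF i] Gi unfolding K_def by simp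
        have UG: "{1..n} \<subseteq> insert x G" using G(2) by blast
        show "Fs ! Suc i = G"
        proof (cases "G \<union> K \<noteq> {1..n}")
          case True
          have "x \<notin> K"
          proof
            assume "x \<in> K"
            then have "G \<union> K = {1..n}" using UG KU(2) GUU by blast
            then show False using True by simp
          qed
          then have "K \<subseteq> G" using KU(2) UG by blast
          moreover have "\<not> K \<subset> G" using hf(4)[rule_format, OF K G(1)] .
          ultimately have "K = G" by blast
          then show ?thesis unfolding K_def .
        next
          case False
          then have "G \<inter> K = {}" using alt by simp
          then have "K \<subseteq> {1..n} - G" using KU(2) by blast
          then have "K \<subseteq> {x}" using G(2) by simp
          then have "K = {x}" using KU(1) by blast
          then show ?thesis using KU(3) by simp
        qed
      qed
    qed
  qed
  have "last Fs = G" using all Fs(1) by (simp add: last_conv_nth)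
  then show False using Fs(3) G' x by simp
qed

theorem mainTheorem14:
  fixes n :: nat and E :: "nat set set"
  assumes "hypergraph n E"
  shows "complex_connected (coloring_complex n E) \<longleftrightarrow>
    (\<forall>F\<in>E. \<forall>F'\<in>E. \<exists>Fs :: nat set list. Fs \<noteq> [] \<and> hd Fs = F \<and> last Fs = F' \<and>
       set Fs \<subseteq> E \<and>
       (\<forall>i. Suc i < length Fs \<longrightarrow>
          Fs ! i \<union> Fs ! Suc i \<noteq> {1..n} \<or> Fs ! i \<inter> Fs ! Suc i = {}))"
  (is "?L \<longleftrightarrow> ?R")
proof
  note H = assms
  note hf = hyp_facts1[OF H] hyp_facts2[OF H] hyp_facts3[OF H] hyp_facts4[OF H]
  assume L: ?L
  show ?R
  proof (intro ballI)
    fix F F' assume F: "F \<in> E" and F': "F' \<in> E"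
    have FU0: "F \<noteq> {}" "F \<subseteq> {1..n}" using hf(1)[rule_format, OF F] by auto
    have FU0': "F' \<noteq> {}" "F' \<subseteq> {1..n}" using hf(1)[rule_format, OF F'] by auto
    show "\<exists>Fs :: nat set list. Fs \<noteq> [] \<and> hd Fs = F \<and> last Fs = F' \<and>
       set Fs \<subseteq> E \<and>
       (\<forall>i. Suc i < length Fs \<longrightarrow>
          Fs ! i \<union> Fs ! Suc i \<noteq> {1..n} \<or> Fs ! i \<inter> Fs ! Suc i = {})"
    proof (cases "F = {1..n} \<or> F' = {1..n}")
      case True
      have n1: "\<not> F \<subset> F'" using hf(4)[rule_format, OF F F'] .
      have n2: "\<not> F' \<subset> F" using hf(4)[rule_format, OF F' F] .
      have "F = F'" using True n1 n2 FU0(2) FU0'(2) by blast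
      then show ?thesis using F by (rule_tac x="[F]" in exI) simp
    next
      case False
      have FU: "F \<subset> {1..n}" "F' \<subset> {1..n}" using FU0(2) FU0'(2) False by auto
      have vF: "{F} \<in> coloring_complex n E" by (rule L_vert[OF H FU0(1) FU(1) F]) simp
      have vF': "{F'} \<in> coloring_complex n E" by (rule L_vert[OF H FU0'(1) FU(2) F']) simp
      have c: "conn n E F F'" using L[unfolded complex_connected_def, rule_format, OF vF vF'] .
      have ff: "F \<subseteq> F \<or> F \<inter> F = {}" by simp
      have ff': "F' \<subseteq> F' \<or> F' \<inter> F' = {}" by simp
      have "(adjE n E)\<^sup>*\<^sup>* F F'" using fwd[OF H c FU0(1) FU(1) F ff, rule_format, OF F' ff'] .
      then show ?thesis using rtranclp_to_list[OF _ F'] by blast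
    qed
  qed
next
  note H = assms
  note hf = hyp_facts1[OF H] hyp_facts2[OF H] hyp_facts3[OF H] hyp_facts4[OF H]
  assume R: ?R
  show ?L unfolding complex_connected_def
  proof (intro allI impI)
    fix u v assume u: "{u} \<in> coloring_complex n E" and v: "{v} \<in> coloring_complex n E"
    obtain Gu where Gu: "Gu \<in> E" "Gu \<subseteq> u \<or> Gu \<inter> u = {}"
      using face_assoc[OF u] by (elim bexE) simp
    obtain Gv where Gv: "Gv \<in> E" "Gv \<subseteq> v \<or> Gv \<inter> v = {}"
      using face_assoc[OF v] by (elim bexE) simp
    have uU: "u \<noteq> {}" "u \<subset> {1..n}" using face_mem[OF u] by auto
    have vU: "v \<noteq> {}" "v \<subset> {1..n}" using face_mem[OF v] by auto
    have nU: "{1..n} \<notin> E"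
    proof
      assume U: "{1..n} \<in> E"
      have "Gu \<subseteq> {1..n}" using hf(1)[rule_format, OF Gu(1)] by simp
      moreover have "\<not> Gu \<subset> {1..n}" using hf(4)[rule_format, OF Gu(1) U] .
      ultimately have "Gu = {1..n}" by blast
      then show False using Gu(2) uU by blast
    qed
    have good: "\<forall>G\<in>E. G \<noteq> {1..n} \<and> (\<forall>x. {1..n} - G \<noteq> {x})"
    proof (intro ballI conjI allI)
      fix G assume G: "G \<in> E"
      show "G \<noteq> {1..n}" using G nU by blast
      fix x show "{1..n} - G \<noteq> {x}"
      proof
        assume "{1..n} - G = {x}"
        then show False using good_nonsingle[OF H G _ R] by blast
      qed
    qed
    have gu: "Gu \<noteq> {1..n}" "\<forall>x. {1..n} - Gu \<noteq> {x}" using good Gu(1) by auto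
    have gv: "Gv \<noteq> {1..n}" "\<forall>x. {1..n} - Gv \<noteq> {x}" using good Gv(1) by auto
    have c1: "conn n E u Gu" using vertex_lemma[OF H Gu(1) gu uU Gu(2)] .
    have c3: "conn n E v Gv" using vertex_lemma[OF H Gv(1) gv vU Gv(2)] .
    obtain Fs where Fs: "Fs \<noteq> []" "hd Fs = Gu" "last Fs = Gv" "set Fs \<subseteq> E"
      "\<forall>i. Suc i < length Fs \<longrightarrow>
          Fs ! i \<union> Fs ! Suc i \<noteq> {1..n} \<or> Fs ! i \<inter> Fs ! Suc i = {}"
      using R[rule_format, OF Gu(1) Gv(1)] by (elim exE conjE) blast
    have "(adjE n E)\<^sup>*\<^sup>* Gu Gv" using list_to_rtranclp[OF Fs(1,4,5)] Fs(2,3) by simp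
    then have c2: "conn n E Gu Gv" using chain_lemma[OF H good] by blast
    show "conn n E u v" using c1 c2 conn_sym[OF c3] by (meson rtranclp_trans)
  qed
qed

end
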